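(* For each $n\in\mathbb{Z}^+$, let $\mathsf{A}^{(n)}$ be a strictly lower-triangular $n\times n$ real matrix with entries $a^{(n)}_{i,j}$ and $\mathbf{v}^{(n)}$ an $n$-dimensional real row vector with entries $v^{(n)}_i$. Assume that $|a^{(n)}_{i,j}|^2\leq np$ for all $i,j,n$, for some real $p>0$, and that \[ \liminf_{n\to\infty}-\frac{1}{2n}\log\big\|\mathbf{v}^{(n)}(\mathsf{I}+\mathsf{A}^{(n)})\big\|^2\geq\Gamma \] for some real $\Gamma>0$. Then for each $\epsilon\in(0,\Gamma)$ and all sufficiently large $n$ the following holds: if $|v^{(n)}_j|>e^{-n(\Gamma-\epsilon)}$ for some index $j\in\{1,\ldots,n\}$, then there exists an index $i\in\{j+1,\ldots,n\}$ with \[ |v^{(n)}_i|\geq\frac{|v^{(n)}_j|-e^{-n(\Gamma-\epsilon)}}{n^{3/2}\sqrt{p}}. \] If moreover $\|\mathbf{v}^{(n)}\|=1$ for all $n$, then the cardinality of the set $\mathcal{S}^{(n)}:=\{j\in\{1,\ldots,n\}:|v^{(n)}_j|>n^{-2\log n}\}$ is unbounded in $n$.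
   Context: $\mathsf{I}$ denotes the identity matrix, $\|\cdot\|$ the Euclidean norm, and $\log$ the natural logarithm. *)

theory Defs
  imports "HOL-Analysis.Analysis"
begin

text \<open>Vectors of dimension n are functions nat => real used on indices 1..n;
  n x n matrices are functions nat => nat => real used on indices 1..n.\<close>

definition vnorm :: "nat \<Rightarrow> (nat \<Rightarrow> real) \<Rightarrow> real" where
  "vnorm n v = sqrt (\<Sum>j=1..n. (v j)^2)"

definition row_times_IpA :: "nat \<Rightarrow> (nat \<Rightarrow> real) \<Rightarrow> (nat \<Rightarrow> nat \<Rightarrow> real) \<Rightarrow> nat \<Rightarrow> real" where
  "row_times_IpA n v a j = v j + (\<Sum>i=1..n. v i * a i j)"

definition neg_log_rate :: "nat \<Rightarrow> real \<Rightarrow> ereal" where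
  "neg_log_rate n s = (if s = 0 then \<infinity> else ereal (- (1 / (2 * real n)) * ln s))"

end

theory Submission
  imports Defs "HOL-Real_Asymp.Real_Asymp"
begin

lemma part1:
  fixes a :: "nat \<Rightarrow> nat \<Rightarrow> nat \<Rightarrow> real"
    and v :: "nat \<Rightarrow> nat \<Rightarrow> real"
    and p \<Gamma> \<epsilon> :: real
  assumes lower: "\<And>n i j. 1 \<le> n \<Longrightarrow> i \<in> {1..n} \<Longrightarrow> j \<in> {1..n} \<Longrightarrow> i \<le> j \<Longrightarrow> a n i j = 0"
    and p_pos: "p > 0"
    and bound: "\<And>n i j. 1 \<le> n \<Longrightarrow> i \<in> {1..n} \<Longrightarrow> j \<in> {1..n} \<Longrightarrow> \<bar>a n i j\<bar>^2 \<le> real n * p"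
    and liminf: "Liminf sequentially (\<lambda>n. neg_log_rate n ((vnorm n (row_times_IpA n (v n) (a n)))^2)) \<ge> ereal \<Gamma>"
    and eps: "0 < \<epsilon>"
  shows "\<forall>\<^sub>F n in sequentially. \<forall>j\<in>{1..n}.
               \<bar>v n j\<bar> > exp (- real n * (\<Gamma> - \<epsilon>)) \<longrightarrow>
               (\<exists>i\<in>{j+1..n}. \<bar>v n i\<bar> \<ge> (\<bar>v n j\<bar> - exp (- real n * (\<Gamma> - \<epsilon>))) / (real n powr (3/2) * sqrt p))"
proof -
  have "ereal (\<Gamma> - \<epsilon>) < ereal \<Gamma>" using eps by simp
  also note liminf
  finally have ev: "\<forall>\<^sub>F n in sequentially. ereal (\<Gamma> - \<epsilon>) < neg_log_rate n ((vnorm n (row_times_IpA n (v n) (a n)))^2)"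
    by (rule less_LiminfD)
  show ?thesis using ev
  proof (rule eventually_mono)
    fix n
    assume H: "ereal (\<Gamma> - \<epsilon>) < neg_log_rate n ((vnorm n (row_times_IpA n (v n) (a n)))^2)"
    define w where "w = row_times_IpA n (v n) (a n)"
    define E where "E = exp (- real n * (\<Gamma> - \<epsilon>))"
    define s where "s = (\<Sum>i=1..n. (w i)^2)"
    have s0: "s \<ge> 0" unfolding s_def by (simp add: sum_nonneg)
    have vn: "(vnorm n w)^2 = s" unfolding vnorm_def s_def by (simp add: sum_nonneg)
    have Epos: "E > 0" unfolding E_def by simp
    show "\<forall>j\<in>{1..n}. \<bar>v n j\<bar> > E \<longrightarrow>
               (\<exists>i\<in>{j+1..n}. \<bar>v n i\<bar> \<ge> (\<bar>v n j\<bar> - E) / (real n powr (3/2) * sqrt p))"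
    proof (intro ballI impI)
      fix j assume j: "j \<in> {1..n}" and vj: "\<bar>v n j\<bar> > E"
      have n1: "n \<ge> 1" using j by simp
      have wj: "\<bar>w j\<bar> < E"
      proof (cases "s = 0")
        case True
        have "(w j)^2 \<le> s" unfolding s_def using j
          by (intro member_le_sum) auto
        then have "w j = 0" using True by simp
        then show ?thesis using Epos by simp
      next
        case False
        then have spos: "s > 0" using s0 by simp
        have "ereal (\<Gamma> - \<epsilon>) < ereal (- (1 / (2 * real n)) * ln s)"
          using H False unfolding w_def[symmetric] vn neg_log_rate_def by simp
        then have "\<Gamma> - \<epsilon> < - (1 / (2 * real n)) * ln s" by simp
        then have "2 * real n * (\<Gamma> - \<epsilon>) < - ln s" using n1
          by (simp add: field_simps)
        then have "ln s < 2 * (- real n * (\<Gamma> - \<epsilon>))" by simp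
        then have "s < exp (2 * (- real n * (\<Gamma> - \<epsilon>)))"
          using spos by (metis exp_less_mono exp_ln)
        also have "\<dots> = E^2" unfolding E_def by (simp add: exp_double[symmetric] power2_eq_square exp_add[symmetric])
        finally have sE: "s < E^2" .
        have "(w j)^2 \<le> s" unfolding s_def using j
          by (intro member_le_sum) auto
        then have "(w j)^2 < E^2" using sE by simp
        then show ?thesis using power2_less_imp_less[of "\<bar>w j\<bar>" E] Epos by simp
      qed
      show "\<exists>i\<in>{j+1..n}. \<bar>v n i\<bar> \<ge> (\<bar>v n j\<bar> - E) / (real n powr (3/2) * sqrt p)"
      proof (rule ccontr)
        assume "\<not> ?thesis"
        then have lt: "\<And>i. i \<in> {j+1..n} \<Longrightarrow> \<bar>v n i\<bar> < (\<bar>v n j\<bar> - E) / (real n powr (3/2) * sqrt p)"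
          by (auto simp: not_le)
        define M where "M = (\<bar>v n j\<bar> - E) / (real n powr (3/2) * sqrt p)"
        have npos: "real n > 0" using n1 by simp
        have Mpos: "M > 0" unfolding M_def using vj npos p_pos by simp
        have trm: "\<bar>v n i * a n i j\<bar> \<le> M * sqrt (real n * p)" if i: "i \<in> {1..n}" for i
        proof (cases "i \<le> j")
          case True
          then have "a n i j = 0" using lower[OF n1 i j] by simp
          then show ?thesis using Mpos p_pos by simp
        next
          case False
          then have "i \<in> {j+1..n}" using i by auto
          then have vi: "\<bar>v n i\<bar> < M" using lt M_def by simp
          have ai: "\<bar>a n i j\<bar> \<le> sqrt (real n * p)"
            using bound[OF n1 i j] by (simp add: real_le_rsqrt)
          have "\<bar>v n i * a n i j\<bar> = \<bar>v n i\<bar> * \<bar>a n i j\<bar>" by (simp add: abs_mult)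
          also have "\<dots> \<le> M * sqrt (real n * p)"
            using vi ai by (intro mult_mono) auto
          finally show ?thesis .
        qed
        have "\<bar>\<Sum>i=1..n. v n i * a n i j\<bar> \<le> (\<Sum>i=1..n. \<bar>v n i * a n i j\<bar>)"
          by (rule sum_abs)
        also have "\<dots> \<le> (\<Sum>i=1..n. M * sqrt (real n * p))"
          using trm by (intro sum_mono) auto
        also have "\<dots> = real n * M * sqrt (real n * p)" by simp
        also have "\<dots> = M * (real n powr (3/2) * sqrt p)"
        proof -
          have "real n powr (3/2) = real n powr 1 * real n powr (1/2)"
            by (subst powr_add[symmetric]) simp
          also have "\<dots> = real n * sqrt (real n)" using npos by (simp add: powr_half_sqrt)
          finally show ?thesis by (simp add: real_sqrt_mult)
        qed
        also have "\<dots> = \<bar>v n j\<bar> - E" unfolding M_def using npos p_pos by simp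
        finally have A: "\<bar>\<Sum>i=1..n. v n i * a n i j\<bar> \<le> \<bar>v n j\<bar> - E" .
        have "w j = v n j + (\<Sum>i=1..n. v n i * a n i j)" unfolding w_def row_times_IpA_def by simp
        then show False using A wj by linarith
      qed
    qed
  qed
qed


lemma asym1:
  fixes D \<alpha> :: real
  assumes D: "D > 0"
  shows "\<forall>\<^sub>F n in sequentially. real n powr (- 2 * ln (real n)) < real n powr \<alpha> / D"
proof -
  have "((\<lambda>n::nat. real n powr (-2*ln (real n)) / real n powr \<alpha>) \<longlongrightarrow> 0) sequentially"
    by real_asymp
  then have "\<forall>\<^sub>F n in sequentially. real n powr (-2*ln (real n)) / real n powr \<alpha> < 1 / D"
    using D by (intro order_tendstoD(2)) auto
  moreover have "\<forall>\<^sub>F n in sequentially. n > (0::nat)" by (rule eventually_gt_at_top)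
  ultimately show ?thesis
  proof eventually_elim
    case (elim n)
    then have pos: "real n powr \<alpha> > 0" by simp
    from elim(1) pos D show ?case by (simp add: field_simps)
  qed
qed

lemma asym2:
  fixes D \<alpha> c :: real
  assumes D: "D > 0" and c: "c > 0"
  shows "\<forall>\<^sub>F n in sequentially. 2 * exp (- real n * c) \<le> real n powr \<alpha> / D"
proof -
  have "((\<lambda>n::nat. exp (- real n * c) / real n powr \<alpha>) \<longlongrightarrow> 0) sequentially"
    using c by real_asymp
  then have "\<forall>\<^sub>F n in sequentially. exp (- real n * c) / real n powr \<alpha> < 1 / (2 * D)"
    using D by (intro order_tendstoD(2)) auto
  moreover have "\<forall>\<^sub>F n in sequentially. n > (0::nat)" by (rule eventually_gt_at_top)
  ultimately show ?thesis
  proof eventually_elim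
    case (elim n)
    then have pos: "real n powr \<alpha> > 0" by simp
    from elim(1) pos D show ?case by (simp add: field_simps)
  qed
qed

lemma big_entry:
  fixes v :: "nat \<Rightarrow> real" and n :: nat
  assumes n1: "n \<ge> 1" and nrm: "vnorm n v = 1"
  shows "\<exists>j\<in>{1..n}. \<bar>v j\<bar> \<ge> 1 / sqrt (real n)"
proof (rule ccontr)
  assume "\<not> ?thesis"
  then have lt: "\<And>j. j \<in> {1..n} \<Longrightarrow> \<bar>v j\<bar> < 1 / sqrt (real n)" by force
  have npos: "real n > 0" using n1 by simp
  have sq: "\<And>j. j \<in> {1..n} \<Longrightarrow> (v j)^2 < 1 / real n"
  proof -
    fix j assume j: "j \<in> {1..n}"
    have "\<bar>v j\<bar>^2 < (1 / sqrt (real n))^2"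
      using lt[OF j] by (intro power_strict_mono) auto
    then show "(v j)^2 < 1 / real n" using npos by (simp add: power_divide)
  qed
  have "(\<Sum>j=1..n. (v j)^2) < (\<Sum>j=1..n. 1 / real n)"
    using n1 sq by (intro sum_strict_mono) auto
  also have "\<dots> = 1" using npos by simp
  finally have "(\<Sum>j=1..n. (v j)^2) < 1" .
  moreover have "sqrt (\<Sum>j=1..n. (v j)^2) = 1" using nrm unfolding vnorm_def .
  ultimately show False by simp
qed

lemma chain:
  fixes v :: "nat \<Rightarrow> real" and n K :: nat and p E thr :: real and L :: "nat \<Rightarrow> real"
  assumes n1: "n \<ge> 1" and nrm: "vnorm n v = 1" and p_pos: "p > 0" and Epos: "E > 0"
    and P1: "\<forall>j\<in>{1..n}. \<bar>v j\<bar> > E \<longrightarrow> (\<exists>i\<in>{j+1..n}. \<bar>v i\<bar> \<ge> (\<bar>v j\<bar> - E) / (real n powr (3/2) * sqrt p))"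
    and L0: "L 0 = 1 / sqrt (real n)"
    and LS: "\<And>k. L (Suc k) = L k / (2 * (real n powr (3/2) * sqrt p))"
    and thr: "\<And>k. k \<le> K \<Longrightarrow> thr < L k"
    and LE: "\<And>k. k \<le> K \<Longrightarrow> 2 * E \<le> L k"
  shows "K + 1 \<le> card {j\<in>{1..n}. \<bar>v j\<bar> > thr}"
proof -
  define S where "S = {j\<in>{1..n}. \<bar>v j\<bar> > thr}"
  have finS: "finite S" unfolding S_def by simp
  have Q: "k \<le> K \<Longrightarrow> \<exists>j\<in>{1..n}. L k \<le> \<bar>v j\<bar> \<and> k + 1 \<le> card {i\<in>S. i \<le> j}" for k
  proof (induction k)
    case 0
    obtain j where j: "j \<in> {1..n}" "\<bar>v j\<bar> \<ge> 1 / sqrt (real n)" using big_entry[OF n1 nrm] by blast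
    have "j \<in> S" unfolding S_def using j thr[of 0] L0 by auto
    then have "j \<in> {i\<in>S. i \<le> j}" by simp
    moreover have "finite {i\<in>S. i \<le> j}" using finS by simp
    ultimately have "card {i\<in>S. i \<le> j} \<ge> 1"
      by (metis One_nat_def Suc_leI card_gt_0_iff empty_iff)
    then show ?case using j L0 by auto
  next
    case (Suc k)
    then obtain j where j: "j \<in> {1..n}" "L k \<le> \<bar>v j\<bar>" "k + 1 \<le> card {i\<in>S. i \<le> j}" by auto
    have kK: "k \<le> K" using Suc.prems by simp
    have "2 * E \<le> \<bar>v j\<bar>" using LE[OF kK] j by simp
    then have "\<bar>v j\<bar> > E" using Epos by simp
    then obtain i where i: "i \<in> {j+1..n}" "\<bar>v i\<bar> \<ge> (\<bar>v j\<bar> - E) / (real n powr (3/2) * sqrt p)"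
      using P1 j by blast
    have Dpos: "real n powr (3/2) * sqrt p > 0" using n1 p_pos by simp
    have "L (Suc k) = (L k / 2) / (real n powr (3/2) * sqrt p)" using LS by simp
    also have "\<dots> \<le> (\<bar>v j\<bar> - E) / (real n powr (3/2) * sqrt p)"
      using Dpos j(2) \<open>2 * E \<le> \<bar>v j\<bar>\<close> by (intro divide_right_mono) auto
    also have "\<dots> \<le> \<bar>v i\<bar>" by (rule i(2))
    finally have Li: "L (Suc k) \<le> \<bar>v i\<bar>" .
    have iS: "i \<in> S" unfolding S_def using i Li thr[OF Suc.prems] by auto
    have sub: "insert i {i'\<in>S. i' \<le> j} \<subseteq> {i'\<in>S. i' \<le> i}" using iS i by auto
    have nin: "i \<notin> {i'\<in>S. i' \<le> j}" using i by auto
    have c1: "card (insert i {i'\<in>S. i' \<le> j}) = Suc (card {i'\<in>S. i' \<le> j})"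
      using finS nin by simp
    have c2: "card (insert i {i'\<in>S. i' \<le> j}) \<le> card {i'\<in>S. i' \<le> i}"
      using sub finS by (intro card_mono) auto
    have "Suc k + 1 \<le> card {i'\<in>S. i' \<le> i}" using j(3) c1 c2 by simp
    moreover have "i \<in> {1..n}" using i j by auto
    ultimately show ?case using Li by blast
  qed
  obtain j where j: "j \<in> {1..n}" "K + 1 \<le> card {i\<in>S. i \<le> j}" using Q[of K] by auto
  have "card {i\<in>S. i \<le> j} \<le> card S" using finS by (intro card_mono) auto
  then show ?thesis using j unfolding S_def by simp
qed

theorem lemma3:
  fixes a :: "nat \<Rightarrow> nat \<Rightarrow> nat \<Rightarrow> real"
    and v :: "nat \<Rightarrow> nat \<Rightarrow> real"
    and p \<Gamma> :: real
  assumes lower: "\<And>n i j. 1 \<le> n \<Longrightarrow> i \<in> {1..n} \<Longrightarrow> j \<in> {1..n} \<Longrightarrow> i \<le> j \<Longrightarrow> a n i j = 0"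
    and p_pos: "p > 0"
    and bound: "\<And>n i j. 1 \<le> n \<Longrightarrow> i \<in> {1..n} \<Longrightarrow> j \<in> {1..n} \<Longrightarrow> \<bar>a n i j\<bar>^2 \<le> real n * p"
    and Gamma_pos: "\<Gamma> > 0"
    and liminf: "Liminf sequentially (\<lambda>n. neg_log_rate n ((vnorm n (row_times_IpA n (v n) (a n)))^2)) \<ge> ereal \<Gamma>"
  shows "(\<forall>\<epsilon>. 0 < \<epsilon> \<and> \<epsilon> < \<Gamma> \<longrightarrow>
            (\<forall>\<^sub>F n in sequentially. \<forall>j\<in>{1..n}.
               \<bar>v n j\<bar> > exp (- real n * (\<Gamma> - \<epsilon>)) \<longrightarrow>
               (\<exists>i\<in>{j+1..n}. \<bar>v n i\<bar> \<ge> (\<bar>v n j\<bar> - exp (- real n * (\<Gamma> - \<epsilon>))) / (real n powr (3/2) * sqrt p))))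
         \<and> ((\<forall>n\<ge>1. vnorm n (v n) = 1) \<longrightarrow>
            \<not> bdd_above (range (\<lambda>n. card {j\<in>{1..n}. \<bar>v n j\<bar> > real n powr (- 2 * ln (real n))})))"
proof (intro conjI allI impI)
  fix \<epsilon> :: real assume "0 < \<epsilon> \<and> \<epsilon> < \<Gamma>"
  then show "\<forall>\<^sub>F n in sequentially. \<forall>j\<in>{1..n}.
               \<bar>v n j\<bar> > exp (- real n * (\<Gamma> - \<epsilon>)) \<longrightarrow>
               (\<exists>i\<in>{j+1..n}. \<bar>v n i\<bar> \<ge> (\<bar>v n j\<bar> - exp (- real n * (\<Gamma> - \<epsilon>))) / (real n powr (3/2) * sqrt p))"
    using part1[OF lower p_pos bound liminf] by blast
next
  assume nrm: "\<forall>n\<ge>1. vnorm n (v n) = 1"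
  show "\<not> bdd_above (range (\<lambda>n. card {j\<in>{1..n}. \<bar>v n j\<bar> > real n powr (- 2 * ln (real n))}))"
  proof
    assume "bdd_above (range (\<lambda>n. card {j\<in>{1..n}. \<bar>v n j\<bar> > real n powr (- 2 * ln (real n))}))"
    then obtain K where K: "\<And>n. card {j\<in>{1..n}. \<bar>v n j\<bar> > real n powr (- 2 * ln (real n))} \<le> K"
      unfolding bdd_above_def by auto
    define c where "c = \<Gamma> - \<Gamma> / 2"
    have cpos: "c > 0" unfolding c_def using Gamma_pos by simp
    define L where "L k n = real n powr (- 1/2 - 3/2 * real k) / (2 * sqrt p)^k" for k n
    have Dpos: "(2 * sqrt p)^k > 0" for k :: nat using p_pos by simp
    have ev1: "\<forall>\<^sub>F n in sequentially. \<forall>j\<in>{1..n}.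
               \<bar>v n j\<bar> > exp (- real n * c) \<longrightarrow>
               (\<exists>i\<in>{j+1..n}. \<bar>v n i\<bar> \<ge> (\<bar>v n j\<bar> - exp (- real n * c)) / (real n powr (3/2) * sqrt p))"
      unfolding c_def using part1[OF lower p_pos bound liminf, of "\<Gamma>/2"] Gamma_pos by simp
    have ev2: "\<forall>\<^sub>F n in sequentially. \<forall>k\<in>{..K}. real n powr (- 2 * ln (real n)) < L k n"
      unfolding L_def using Dpos by (intro eventually_ball_finite ballI asym1) auto
    have ev3: "\<forall>\<^sub>F n in sequentially. \<forall>k\<in>{..K}. 2 * exp (- real n * c) \<le> L k n"
      unfolding L_def using Dpos cpos by (intro eventually_ball_finite ballI asym2) auto
    have ev4: "\<forall>\<^sub>F n in sequentially. n \<ge> (1::nat)" by (rule eventually_ge_at_top)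
    have "\<forall>\<^sub>F n in sequentially. (\<forall>j\<in>{1..n}.
               \<bar>v n j\<bar> > exp (- real n * c) \<longrightarrow>
               (\<exists>i\<in>{j+1..n}. \<bar>v n i\<bar> \<ge> (\<bar>v n j\<bar> - exp (- real n * c)) / (real n powr (3/2) * sqrt p)))
         \<and> (\<forall>k\<in>{..K}. real n powr (- 2 * ln (real n)) < L k n)
         \<and> (\<forall>k\<in>{..K}. 2 * exp (- real n * c) \<le> L k n) \<and> n \<ge> 1"
      using ev1 ev2 ev3 ev4 by eventually_elim auto
    then obtain N where N: "\<And>n. n \<ge> N \<Longrightarrow> (\<forall>j\<in>{1..n}.
               \<bar>v n j\<bar> > exp (- real n * c) \<longrightarrow>
               (\<exists>i\<in>{j+1..n}. \<bar>v n i\<bar> \<ge> (\<bar>v n j\<bar> - exp (- real n * c)) / (real n powr (3/2) * sqrt p)))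
         \<and> (\<forall>k\<in>{..K}. real n powr (- 2 * ln (real n)) < L k n)
         \<and> (\<forall>k\<in>{..K}. 2 * exp (- real n * c) \<le> L k n) \<and> n \<ge> 1"
      unfolding eventually_sequentially by blast
    note NN = N[of N, simplified]
    have n1: "N \<ge> 1" using NN by simp
    have npos: "real N > 0" using n1 by simp
    have L0: "L 0 N = 1 / sqrt (real N)"
    proof -
      have "L 0 N = real N powr (- (1/2))" unfolding L_def by simp
      also have "\<dots> = inverse (real N powr (1/2))" by (rule powr_minus)
      also have "\<dots> = 1 / sqrt (real N)" using npos
        by (simp only: powr_half_sqrt[of "real N"] inverse_eq_divide of_nat_0_le_iff)
      finally show ?thesis .
    qed
    have LS: "L (Suc k) N = L k N / (2 * (real N powr (3/2) * sqrt p))" for k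
    proof -
      have e: "- 1/2 - 3/2 * real (Suc k) = (- 1/2 - 3/2 * real k) - 3/2" by (simp add: field_simps)
      have "L (Suc k) N = real N powr ((- 1/2 - 3/2 * real k) - 3/2) / (2 * sqrt p)^(Suc k)"
        unfolding L_def e ..
      also have "\<dots> = L k N / (2 * (real N powr (3/2) * sqrt p))"
        unfolding L_def powr_diff by (simp add: field_simps)
      finally show ?thesis .
    qed
    have "K + 1 \<le> card {j\<in>{1..N}. \<bar>v N j\<bar> > real N powr (- 2 * ln (real N))}"
    proof (rule chain[where L="\<lambda>k. L k N" and E="exp (- real N * c)" and p=p])
      show "1 \<le> N" by (rule n1)
      show "vnorm N (v N) = 1" using nrm n1 by simp
    qed (use NN p_pos L0 LS in auto)
    then show False using K[of N] by simp
  qed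
qed

end
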